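(* For every positive integer $n$, the difference graph of the cyclic group $\mathbb{Z}_n$ equals the difference graph of the dihedral group $D_{2n}$ of order $2n$, where $\mathbb{Z}_n$ is identified with the cyclic subgroup of rotations of index $2$ in $D_{2n}$.
   Context: For a finite group $G$ with identity $e$: the intersection power graph $\mathcal{G}_I(G)$ has vertex set $G$, two distinct non-identity vertices $x,y$ being adjacent iff $\langle x\rangle\cap\langle y\rangle\neq\{e\}$, and $e$ being adjacent to every other vertex. The power graph $\mathcal{P}(G)$ has vertex set $G$, two distinct vertices being adjacent iff one is a power of the other. The difference graph $\mathcal{D}(G)$ is the graph on vertex set $G$ with edge set $E(\mathcal{G}_I(G))\setminus E(\mathcal{P}(G))$, with all isolated vertices removed. *)

theory Defs
  imports "HOL-Algebra.Algebra"
begin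

text \<open>Graphs are represented as a pair (vertex set, edge set), edges being
  two-element sets of vertices.\<close>

definition ipg_adj :: "('a, 'b) monoid_scheme \<Rightarrow> 'a \<Rightarrow> 'a \<Rightarrow> bool" where
  "ipg_adj G x y \<longleftrightarrow> x \<in> carrier G \<and> y \<in> carrier G \<and> x \<noteq> y \<and>
     (x = \<one>\<^bsub>G\<^esub> \<or> y = \<one>\<^bsub>G\<^esub> \<or>
      generate G {x} \<inter> generate G {y} \<noteq> {\<one>\<^bsub>G\<^esub>})"

definition pg_adj :: "('a, 'b) monoid_scheme \<Rightarrow> 'a \<Rightarrow> 'a \<Rightarrow> bool" where
  "pg_adj G x y \<longleftrightarrow> x \<in> carrier G \<and> y \<in> carrier G \<and> x \<noteq> y \<and>
     ((\<exists>k::int. y = x [^]\<^bsub>G\<^esub> k) \<or> (\<exists>k::int. x = y [^]\<^bsub>G\<^esub> k))"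

definition diff_edges :: "('a, 'b) monoid_scheme \<Rightarrow> 'a set set" where
  "diff_edges G = {{x, y} | x y. ipg_adj G x y \<and> \<not> pg_adj G x y}"

text \<open>Difference graph: edges of the intersection power graph not in the power
  graph, with isolated vertices removed (vertices = those lying on an edge).\<close>
definition diff_graph :: "('a, 'b) monoid_scheme \<Rightarrow> 'a set \<times> 'a set set" where
  "diff_graph G = (\<Union> (diff_edges G), diff_edges G)"

text \<open>Dihedral group of order 2n: (a, s) stands for r^a f^s with 0 \<le> a < n.\<close>
definition dihedral :: "nat \<Rightarrow> (nat \<times> bool) monoid" where
  "dihedral n = \<lparr> carrier = {(a, s). a < n},
     monoid.mult = (\<lambda>(a, s) (b, t). ((if s then a + (n - b) else a + b) mod n, s \<noteq> t)),
     monoid.one = (0, False) \<rparr>"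

definition rotations :: "nat \<Rightarrow> (nat \<times> bool) set" where
  "rotations n = {(a, False) | a. a < n}"

end

theory Submission imports Defs begin

definition sg :: "bool \<Rightarrow> int" where "sg s = (if s then -1 else 1)"

lemma dih_fst: "b < n \<Longrightarrow> int (fst ((a, s) \<otimes>\<^bsub>dihedral n\<^esub> (b, t))) = (int a + sg s * int b) mod int n"
proof -
  assume b: "b < n"
  show ?thesis
  proof (cases s)
    case True
    then have "int (a + (n - b)) = (int a - int b) + int n" using b by simp
    then have "int ((a + (n - b)) mod n) = (int a - int b + int n) mod int n"
      by (simp only: zmod_int)
    also have "\<dots> = (int a - int b) mod int n" by (rule mod_add_self2)
    finally show ?thesis using True by (simp add: dihedral_def sg_def)
  next
    case False then show ?thesis by (simp add: dihedral_def sg_def zmod_int)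
  qed
qed

lemma dih_snd: "snd ((a, s) \<otimes>\<^bsub>dihedral n\<^esub> (b, t)) = (s \<noteq> t)"
  by (simp add: dihedral_def)

lemma dih_lt: "n \<ge> 1 \<Longrightarrow> fst ((a, s) \<otimes>\<^bsub>dihedral n\<^esub> (b, t)) < n"
  by (simp add: dihedral_def)

lemma dih_assoc:
  assumes n: "n \<ge> 1" and "b < n" "c < n"
  shows "((a,s) \<otimes>\<^bsub>dihedral n\<^esub> (b,t)) \<otimes>\<^bsub>dihedral n\<^esub> (c,u) = (a,s) \<otimes>\<^bsub>dihedral n\<^esub> ((b,t) \<otimes>\<^bsub>dihedral n\<^esub> (c,u))"
proof -
  define p where "p = (a,s) \<otimes>\<^bsub>dihedral n\<^esub> (b,t)"
  define q where "q = (b,t) \<otimes>\<^bsub>dihedral n\<^esub> (c,u)"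
  have p: "p = (fst p, s \<noteq> t)" "int (fst p) = (int a + sg s * int b) mod int n"
    using dih_fst[OF assms(2)] by (auto simp: p_def dih_snd prod_eq_iff)
  have q: "q = (fst q, t \<noteq> u)" "int (fst q) = (int b + sg t * int c) mod int n" "fst q < n"
    using dih_fst[OF assms(3)] dih_lt[OF n] by (auto simp: q_def dih_snd prod_eq_iff)
  have sgm: "sg (s \<noteq> t) = sg s * sg t" by (simp add: sg_def)
  have "int (fst (p \<otimes>\<^bsub>dihedral n\<^esub> (c,u))) = (int (fst p) + sg (s \<noteq> t) * int c) mod int n"
    using dih_fst[OF assms(3)] p(1) by metis
  also have "\<dots> = (int a + sg s * int b + sg s * sg t * int c) mod int n"
    using sgm by (simp add: p(2) mod_add_left_eq)
  finally have L: "int (fst (p \<otimes>\<^bsub>dihedral n\<^esub> (c,u))) = (int a + sg s * int b + sg s * sg t * int c) mod int n" .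
  have "int (fst ((a,s) \<otimes>\<^bsub>dihedral n\<^esub> q)) = (int a + sg s * int (fst q)) mod int n"
    using dih_fst[OF q(3)] q(1) by metis
  also have "\<dots> = (int a + sg s * (int b + sg t * int c)) mod int n"
    unfolding q(2) by (metis mod_add_right_eq mod_mult_right_eq)
  also have "\<dots> = (int a + sg s * int b + sg s * sg t * int c) mod int n"
    by (simp add: algebra_simps)
  finally have R: "int (fst ((a,s) \<otimes>\<^bsub>dihedral n\<^esub> q)) = (int a + sg s * int b + sg s * sg t * int c) mod int n" .
  have "fst (p \<otimes>\<^bsub>dihedral n\<^esub> (c,u)) = fst ((a,s) \<otimes>\<^bsub>dihedral n\<^esub> q)" using L R by simp
  moreover have "snd (p \<otimes>\<^bsub>dihedral n\<^esub> (c,u)) = snd ((a,s) \<otimes>\<^bsub>dihedral n\<^esub> q)"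
  proof -
    have 1: "snd (p \<otimes>\<^bsub>dihedral n\<^esub> (c,u)) = ((s \<noteq> t) \<noteq> u)"
      by (subst p(1)) (rule dih_snd)
    have 2: "snd ((a,s) \<otimes>\<^bsub>dihedral n\<^esub> q) = (s \<noteq> (t \<noteq> u))"
      by (subst q(1)) (rule dih_snd)
    show ?thesis unfolding 1 2 by auto
  qed
  ultimately have "p \<otimes>\<^bsub>dihedral n\<^esub> (c,u) = (a,s) \<otimes>\<^bsub>dihedral n\<^esub> q" by (rule prod_eqI)
  from this[unfolded p_def q_def] show ?thesis .
qed

lemma dih_group: assumes n: "n \<ge> 1" shows "group (dihedral n)"
proof (rule groupI)
  show "\<one>\<^bsub>dihedral n\<^esub> \<in> carrier (dihedral n)" using n by (simp add: dihedral_def)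
  fix x y z assume x: "x \<in> carrier (dihedral n)" and y: "y \<in> carrier (dihedral n)"
     and z: "z \<in> carrier (dihedral n)"
  obtain a s where xa: "x = (a,s)" "a < n" using x by (cases x) (auto simp: dihedral_def)
  obtain b t where yb: "y = (b,t)" "b < n" using y by (cases y) (auto simp: dihedral_def)
  obtain c u where zc: "z = (c,u)" "c < n" using z by (cases z) (auto simp: dihedral_def)
  show "x \<otimes>\<^bsub>dihedral n\<^esub> y \<in> carrier (dihedral n)" using xa yb n by (simp add: dihedral_def)
  show "\<one>\<^bsub>dihedral n\<^esub> \<otimes>\<^bsub>dihedral n\<^esub> x = x" using xa by (simp add: dihedral_def)
  show "\<exists>w\<in>carrier (dihedral n). w \<otimes>\<^bsub>dihedral n\<^esub> x = \<one>\<^bsub>dihedral n\<^esub>"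
  proof (cases s)
    case True then show ?thesis using xa
      by (intro bexI[of _ "(a, True)"]) (auto simp: dihedral_def)
  next
    case False
    have "((n - a) mod n + a) mod n = 0"
      using xa(2) by (metis add.commute le_add_diff_inverse less_imp_le mod_add_right_eq mod_self)
    then show ?thesis using xa False n
      by (intro bexI[of _ "((n - a) mod n, False)"]) (auto simp: dihedral_def)
  qed
  show "x \<otimes>\<^bsub>dihedral n\<^esub> y \<otimes>\<^bsub>dihedral n\<^esub> z = x \<otimes>\<^bsub>dihedral n\<^esub> (y \<otimes>\<^bsub>dihedral n\<^esub> z)"
    using dih_assoc[OF n yb(2) zc(2)] xa yb zc by simp
qed

lemma rot_subgroup: assumes n: "n \<ge> 1" shows "subgroup (rotations n) (dihedral n)"
proof -
  interpret group "dihedral n" by (rule dih_group[OF n])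
  show ?thesis
  proof
    show "rotations n \<subseteq> carrier (dihedral n)" by (auto simp: rotations_def dihedral_def)
    show "\<one>\<^bsub>dihedral n\<^esub> \<in> rotations n" using n by (simp add: rotations_def dihedral_def)
    fix x y assume x: "x \<in> rotations n" and y: "y \<in> rotations n"
    show "x \<otimes>\<^bsub>dihedral n\<^esub> y \<in> rotations n" using x y n by (auto simp: rotations_def dihedral_def)
  next
    fix x assume x: "x \<in> rotations n"
    obtain a where xa: "x = (a, False)" "a < n" using x by (auto simp: rotations_def)
    have e: "((n - a) mod n + a) mod n = 0"
      using xa(2) by (metis add.commute le_add_diff_inverse less_imp_le mod_add_right_eq mod_self)
    have "inv\<^bsub>dihedral n\<^esub> x = ((n - a) mod n, False)"
      using xa e n by (intro inv_equality) (auto simp: dihedral_def)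
    then show "inv\<^bsub>dihedral n\<^esub> x \<in> rotations n" using n by (simp add: rotations_def)
  qed
qed

lemma refl_generate:
  assumes n: "n \<ge> 1" and a: "a < n"
  shows "generate (dihedral n) {(a, True)} \<subseteq> {\<one>\<^bsub>dihedral n\<^esub>, (a, True)}"
proof -
  interpret group "dihedral n" by (rule dih_group[OF n])
  have x: "(a, True) \<in> carrier (dihedral n)" using a by (simp add: dihedral_def)
  have sq: "(a, True) \<otimes>\<^bsub>dihedral n\<^esub> (a, True) = \<one>\<^bsub>dihedral n\<^esub>"
    using a by (simp add: dihedral_def)
  have iv: "inv\<^bsub>dihedral n\<^esub> (a, True) = (a, True)" using sq x by (intro inv_equality) auto
  have "subgroup {\<one>\<^bsub>dihedral n\<^esub>, (a, True)} (dihedral n)"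
  proof
    show "{\<one>\<^bsub>dihedral n\<^esub>, (a, True)} \<subseteq> carrier (dihedral n)" using x by simp
    show "\<one>\<^bsub>dihedral n\<^esub> \<in> {\<one>\<^bsub>dihedral n\<^esub>, (a, True)}" by simp
    fix y z assume "y \<in> {\<one>\<^bsub>dihedral n\<^esub>, (a, True)}" "z \<in> {\<one>\<^bsub>dihedral n\<^esub>, (a, True)}"
    then show "y \<otimes>\<^bsub>dihedral n\<^esub> z \<in> {\<one>\<^bsub>dihedral n\<^esub>, (a, True)}"
      using sq x by auto
  next
    fix y assume "y \<in> {\<one>\<^bsub>dihedral n\<^esub>, (a, True)}"
    then show "inv\<^bsub>dihedral n\<^esub> y \<in> {\<one>\<^bsub>dihedral n\<^esub>, (a, True)}" using iv by auto
  qed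
  then show ?thesis by (intro generate_subgroup_incl) (auto simp: x)
qed

lemma diff_rot:
  assumes n: "n \<ge> 1" and adj: "ipg_adj (dihedral n) x y" and np: "\<not> pg_adj (dihedral n) x y"
  shows "x \<in> rotations n \<and> y \<in> rotations n"
proof -
  interpret group "dihedral n" by (rule dih_group[OF n])
  have xc: "x \<in> carrier (dihedral n)" and yc: "y \<in> carrier (dihedral n)" and xy: "x \<noteq> y"
    using adj by (auto simp: ipg_adj_def)
  have x1: "x \<noteq> \<one>\<^bsub>dihedral n\<^esub>"
  proof
    assume "x = \<one>\<^bsub>dihedral n\<^esub>"
    then have "x = y [^]\<^bsub>dihedral n\<^esub> (0::int)" by simp
    then show False using np xc yc xy unfolding pg_adj_def by blast
  qed
  have y1: "y \<noteq> \<one>\<^bsub>dihedral n\<^esub>"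
  proof
    assume "y = \<one>\<^bsub>dihedral n\<^esub>"
    then have "y = x [^]\<^bsub>dihedral n\<^esub> (0::int)" by simp
    then show False using np xc yc xy unfolding pg_adj_def by blast
  qed
  have ne: "generate (dihedral n) {x} \<inter> generate (dihedral n) {y} \<noteq> {\<one>\<^bsub>dihedral n\<^esub>}"
    using adj x1 y1 by (auto simp: ipg_adj_def)
  have "\<one>\<^bsub>dihedral n\<^esub> \<in> generate (dihedral n) {x} \<inter> generate (dihedral n) {y}"
    by (auto intro: generate.one)
  with ne obtain z where z: "z \<in> generate (dihedral n) {x}" "z \<in> generate (dihedral n) {y}"
    "z \<noteq> \<one>\<^bsub>dihedral n\<^esub>" by blast
  have carr: "\<And>w. w \<in> carrier (dihedral n) \<Longrightarrow> w \<notin> rotations n \<Longrightarrow> \<exists>a. w = (a, True) \<and> a < n"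
    by (auto simp: dihedral_def rotations_def)
  have "x \<in> rotations n"
  proof (rule ccontr)
    assume "x \<notin> rotations n"
    then obtain a where a: "x = (a, True)" "a < n" using carr xc by blast
    have "z = x" using refl_generate[OF n a(2)] z(1) z(3) a(1) by auto
    then have "x \<in> generate (dihedral n) {y}" using z(2) by simp
    then obtain k where "x = y [^]\<^bsub>dihedral n\<^esub> (k::int)" using generate_pow[OF yc] by auto
    then show False using np xc yc xy unfolding pg_adj_def by blast
  qed
  moreover have "y \<in> rotations n"
  proof (rule ccontr)
    assume "y \<notin> rotations n"
    then obtain a where a: "y = (a, True)" "a < n" using carr yc by blast
    have "z = y" using refl_generate[OF n a(2)] z(2) z(3) a(1) by auto
    then have "y \<in> generate (dihedral n) {x}" using z(1) by simp
    then obtain k where "y = x [^]\<^bsub>dihedral n\<^esub> (k::int)" using generate_pow[OF xc] by auto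
    then show False using np xc yc xy unfolding pg_adj_def by blast
  qed
  ultimately show ?thesis by simp
qed

lemma consist:
  assumes n: "n \<ge> 1" and x: "x \<in> rotations n" and y: "y \<in> rotations n"
  shows "ipg_adj ((dihedral n)\<lparr>carrier := rotations n\<rparr>) x y = ipg_adj (dihedral n) x y"
    and "pg_adj ((dihedral n)\<lparr>carrier := rotations n\<rparr>) x y = pg_adj (dihedral n) x y"
proof -
  interpret group "dihedral n" by (rule dih_group[OF n])
  have H: "subgroup (rotations n) (dihedral n)" by (rule rot_subgroup[OF n])
  have sub: "rotations n \<subseteq> carrier (dihedral n)" using H by (rule subgroup.subset)
  have gx: "generate ((dihedral n)\<lparr>carrier := rotations n\<rparr>) {x} = generate (dihedral n) {x}"
    using x H by (intro generate_consistent) auto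
  have gy: "generate ((dihedral n)\<lparr>carrier := rotations n\<rparr>) {y} = generate (dihedral n) {y}"
    using y H by (intro generate_consistent) auto
  show "ipg_adj ((dihedral n)\<lparr>carrier := rotations n\<rparr>) x y = ipg_adj (dihedral n) x y"
    unfolding ipg_adj_def gx gy using x y sub by auto
  have px: "\<And>k::int. x [^]\<^bsub>(dihedral n)\<lparr>carrier := rotations n\<rparr>\<^esub> k = x [^]\<^bsub>dihedral n\<^esub> k"
    using int_pow_consistent[OF H x] by simp
  have py: "\<And>k::int. y [^]\<^bsub>(dihedral n)\<lparr>carrier := rotations n\<rparr>\<^esub> k = y [^]\<^bsub>dihedral n\<^esub> k"
    using int_pow_consistent[OF H y] by simp
  show "pg_adj ((dihedral n)\<lparr>carrier := rotations n\<rparr>) x y = pg_adj (dihedral n) x y"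
    unfolding pg_adj_def px py using x y sub by auto
qed

theorem lemma8p1:
  fixes n :: nat
  assumes "n \<ge> 1"
  shows "diff_graph ((dihedral n)\<lparr>carrier := rotations n\<rparr>) = diff_graph (dihedral n)"
proof -
  have "diff_edges ((dihedral n)\<lparr>carrier := rotations n\<rparr>) = diff_edges (dihedral n)"
  proof -
    have "\<And>x y. (ipg_adj ((dihedral n)\<lparr>carrier := rotations n\<rparr>) x y \<and> \<not> pg_adj ((dihedral n)\<lparr>carrier := rotations n\<rparr>) x y)
       = (ipg_adj (dihedral n) x y \<and> \<not> pg_adj (dihedral n) x y)"
    proof -
      fix x y
      show "?thesis x y"
      proof (cases "x \<in> rotations n \<and> y \<in> rotations n")
        case True then show ?thesis using consist[OF assms] by simp
      next
        case False
        then have "\<not> ipg_adj ((dihedral n)\<lparr>carrier := rotations n\<rparr>) x y"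
          by (auto simp: ipg_adj_def)
        then show ?thesis using diff_rot[OF assms, of x y] False by auto
      qed
    qed
    then show ?thesis unfolding diff_edges_def by simp
  qed
  then show ?thesis unfolding diff_graph_def by simp
qed

end
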